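(* Let $R$ be a ring, $S\in\max\mathrm{Den}_l(R)$ and $T$ a left denominator set of $R$. Then $T\subseteq S$ if and only if $\mathrm{ass}(T)\subseteq\mathrm{ass}(S)$.
   Context: All rings are associative with $1$. A multiplicative subset $S$ of $R$ ($1\in S$, $0\notin S$, closed under multiplication) is a left Ore set if $Sr\cap Rs\neq\emptyset$ for all $r\in R$, $s\in S$; for it, $\mathrm{ass}(S):=\{r\in R: sr=0\text{ for some } s\in S\}$. A left Ore set $S$ is a left denominator set if $rs=0$ ($r\in R$, $s\in S$) implies $tr=0$ for some $t\in S$. $\max\mathrm{Den}_l(R)$ is the set of maximal elements, under inclusion, of the set of left denominator sets of $R$. *)

theory Defs
  imports Main
begin

definition mult_subset :: "'a::ring_1 set \<Rightarrow> bool" where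
  "mult_subset S \<longleftrightarrow> 1 \<in> S \<and> 0 \<notin> S \<and> (\<forall>s\<in>S. \<forall>t\<in>S. s * t \<in> S)"

definition left_ore_set :: "'a::ring_1 set \<Rightarrow> bool" where
  "left_ore_set S \<longleftrightarrow> mult_subset S \<and>
     (\<forall>r s. s \<in> S \<longrightarrow> (\<exists>s'\<in>S. \<exists>r'. s' * r = r' * s))"

definition ass :: "'a::ring_1 set \<Rightarrow> 'a set" where
  "ass S = {r. \<exists>s\<in>S. s * r = 0}"

definition left_den_set :: "'a::ring_1 set \<Rightarrow> bool" where
  "left_den_set S \<longleftrightarrow> left_ore_set S \<and>
     (\<forall>r s. s \<in> S \<longrightarrow> r * s = 0 \<longrightarrow> (\<exists>t\<in>S. t * r = 0))"

definition maxDen_l :: "'a::ring_1 set set" where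
  "maxDen_l = {S. left_den_set S \<and> (\<forall>T. left_den_set T \<longrightarrow> S \<subseteq> T \<longrightarrow> T = S)}"

end

theory Submission
  imports Defs
begin

inductive_set gen :: "'a::ring_1 set \<Rightarrow> 'a set \<Rightarrow> 'a set" for S T where
  gS: "s \<in> S \<Longrightarrow> s \<in> gen S T"
| gT: "t \<in> T \<Longrightarrow> t \<in> gen S T"
| gM: "u \<in> gen S T \<Longrightarrow> v \<in> gen S T \<Longrightarrow> u * v \<in> gen S T"

lemma gen_ore:
  assumes S: "left_ore_set S" and T: "left_ore_set T" and u: "u \<in> gen S T"
  shows "\<forall>r. \<exists>u'\<in>gen S T. \<exists>r'. u' * r = r' * u"
  using u
proof induction
  case (gS s) then show ?case using S unfolding left_ore_set_def by (meson gen.gS)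
next
  case (gT t) then show ?case using T unfolding left_ore_set_def by (meson gen.gT)
next
  case (gM u1 u2)
  show ?case
  proof
    fix r
    obtain v2 r2 where v2: "v2 \<in> gen S T" "v2 * r = r2 * u2" using gM.IH(2) by blast
    obtain v1 r1 where v1: "v1 \<in> gen S T" "v1 * r2 = r1 * u1" using gM.IH(1) by blast
    have "(v1 * v2) * r = r1 * (u1 * u2)"
      by (metis v1(2) v2(2) mult.assoc)
    then show "\<exists>u'\<in>gen S T. \<exists>r'. u' * r = r' * (u1 * u2)"
      using v1(1) v2(1) gen.gM by blast
  qed
qed

lemma gen_rev:
  assumes S: "left_den_set S" and T: "left_den_set T" and u: "u \<in> gen S T"
  shows "\<forall>r. r * u = 0 \<longrightarrow> (\<exists>u'\<in>gen S T. u' * r = 0)"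
  using u
proof induction
  case (gS s) then show ?case using S unfolding left_den_set_def by (meson gen.gS)
next
  case (gT t) then show ?case using T unfolding left_den_set_def by (meson gen.gT)
next
  case (gM u1 u2)
  show ?case
  proof (intro allI impI)
    fix r assume "r * (u1 * u2) = 0"
    then have "(r * u1) * u2 = 0" by (simp add: mult.assoc)
    then obtain v2 where v2: "v2 \<in> gen S T" "v2 * (r * u1) = 0" using gM.IH(2) by blast
    then have "(v2 * r) * u1 = 0" by (simp add: mult.assoc)
    then obtain v1 where v1: "v1 \<in> gen S T" "v1 * (v2 * r) = 0" using gM.IH(1) by blast
    then have "(v1 * v2) * r = 0" by (simp add: mult.assoc)
    then show "\<exists>u'\<in>gen S T. u' * r = 0" using v1(1) v2(1) gen.gM by blast
  qed
qed

lemma ass_left: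
  assumes S: "left_den_set S" and s: "s \<in> S" and h: "s * r \<in> ass S"
  shows "r \<in> ass S"
proof -
  obtain s' where "s' \<in> S" "s' * (s * r) = 0" using h unfolding ass_def by blast
  moreover have "s' * s \<in> S" using S s \<open>s' \<in> S\<close>
    unfolding left_den_set_def left_ore_set_def mult_subset_def by blast
  ultimately show ?thesis unfolding ass_def by (metis (mono_tags, lifting) mem_Collect_eq mult.assoc)
qed

lemma gen_reg:
  assumes S: "left_den_set S" and T: "left_den_set T" and a: "ass T \<subseteq> ass S"
    and u: "u \<in> gen S T"
  shows "\<forall>r. r * u \<in> ass S \<longrightarrow> r \<in> ass S"
  using u
proof induction
  case (gS s)
  show ?case
  proof (intro allI impI)
    fix r assume "r * s \<in> ass S"
    then obtain s' where s': "s' \<in> S" "s' * (r * s) = 0" unfolding ass_def by blast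
    then have "(s' * r) * s = 0" by (simp add: mult.assoc)
    then obtain t where "t \<in> S" "t * (s' * r) = 0" using S gS unfolding left_den_set_def by blast
    then have "s' * r \<in> ass S" unfolding ass_def by blast
    then show "r \<in> ass S" using ass_left[OF S s'(1)] by blast
  qed
next
  case (gT t)
  show ?case
  proof (intro allI impI)
    fix r assume "r * t \<in> ass S"
    then obtain s' where s': "s' \<in> S" "s' * (r * t) = 0" unfolding ass_def by blast
    then have "(s' * r) * t = 0" by (simp add: mult.assoc)
    then obtain t' where "t' \<in> T" "t' * (s' * r) = 0" using T gT unfolding left_den_set_def by blast
    then have "s' * r \<in> ass T" unfolding ass_def by blast
    then have "s' * r \<in> ass S" using a by blast
    then show "r \<in> ass S" using ass_left[OF S s'(1)] by blast
  qed
next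
  case (gM u1 u2)
  then show ?case by (metis mult.assoc)
qed

lemma gen_den:
  assumes S: "left_den_set S" and T: "left_den_set T" and a: "ass T \<subseteq> ass S"
  shows "left_den_set (gen S T)"
proof -
  have oS: "left_ore_set S" and oT: "left_ore_set T" using S T unfolding left_den_set_def by auto
  have 1: "1 \<in> gen S T" using S gen.gS unfolding left_den_set_def left_ore_set_def mult_subset_def by blast
  have "0 \<notin> gen S T"
  proof
    assume "0 \<in> gen S T"
    then have "\<forall>r. r * 0 \<in> ass S \<longrightarrow> r \<in> ass S" using gen_reg[OF S T a] by blast
    moreover have "(1::'a) * 0 \<in> ass S" using S
      unfolding ass_def left_den_set_def left_ore_set_def mult_subset_def by force
    ultimately have "1 \<in> ass S" by blast
    then obtain s where "s \<in> S" "s * 1 = 0" unfolding ass_def by blast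
    then show False using S unfolding left_den_set_def left_ore_set_def mult_subset_def by auto
  qed
  then have "mult_subset (gen S T)" using 1 gen.gM unfolding mult_subset_def by blast
  then show ?thesis
    unfolding left_den_set_def left_ore_set_def
    using gen_ore[OF oS oT] gen_rev[OF S T] by blast
qed

theorem corollary2p3:
  fixes S T :: "'a::ring_1 set"
  assumes "S \<in> maxDen_l" and "left_den_set T"
  shows "T \<subseteq> S \<longleftrightarrow> ass T \<subseteq> ass S"
proof
  assume "T \<subseteq> S" then show "ass T \<subseteq> ass S" unfolding ass_def by blast
next
  assume a: "ass T \<subseteq> ass S"
  have S: "left_den_set S" using assms(1) unfolding maxDen_l_def by blast
  have "left_den_set (gen S T)" using gen_den[OF S assms(2) a] .
  moreover have "S \<subseteq> gen S T" using gen.gS by blast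
  ultimately have "gen S T = S" using assms(1) unfolding maxDen_l_def by blast
  then show "T \<subseteq> S" using gen.gT by blast
qed

end
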